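(* Let $q$ be a fixed rational number. Then the set of programs $\{M\mid ME[U](M)>q\}$ is a $(\lfloor 2^q\rfloor+1)$-observable hyperproperty.
   Context: Stores map variables to values; $H$ is the high input variable and $O$ the low output variable. A trace is a sequence of stores. For a finite trace $t$, $t\circ t'$ is concatenation. A program is a set $M$ of infinite traces that is deterministic (two traces with the same initial value of $H$ are equal) and has a finite nonempty input domain $\mathbb{H}_M=\{\sigma_0(H)\}$. Input domains are unbounded in size. $M(h)$ is the output trace $(\sigma_1(O),\sigma_2(O),\dots)$ of the trace of $M$ starting with $H=h$. $\bot$ denotes termination. $M(h)=o$ means that for all $i$, $o_i=\bot$ or $M(h)_i=\bot$ or $M(h)_i=o_i$. For a distribution $\mu$ on $\mathbb{H}_M$, $\mu(O=o)=\sum_{h:M(h)=o}\mu(H=h)$, with conditional probabilities induced accordingly. $U$ is the uniform distribution on $\mathbb{H}_M$. Min-entropy QIF (log base 2): $\mathcal{V}[\mu](X)=\max_x\mu(X=x)$, $\mathcal{V}[\mu](X|Y)=\sum_y\mu(Y=y)\max_x\mu(X=x|Y=y)$, and $ME[\mu](M)=\log\frac1{\mathcal{V}[\mu](H)}-\log\frac1{\mathcal{V}[\mu](H|O)}$. $\mathit{Prop}$ is the set of programs; $\mathit{Obs}$ is the set of deterministic finite sets of finite traces. For $S\in\mathit{Obs}$ and $T\in\mathit{Prop}$, $S\le T$ iff every $t\in S$ has some $t'$ with $t\circ t'\in T$. $P\subseteq\mathit{Prop}$ is $k$-observable iff for every $S\in P$ there is $T\in\mathit{Obs}$ with $T\le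 S$ and $|T|\le k$ such that every $S'\in\mathit{Prop}$ with $T\le S'$ is in $P$. *)

theory Defs
  imports Complex_Main
begin

(* Variables: the high input Hv, the low output Ov, and other program variables. *)
datatype var = Hv | Ov | OtherVar nat

(* Values: 'v option, where None plays the role of the termination symbol bottom. *)
type_synonym 'v store = "var \<Rightarrow> 'v option"
type_synonym 'v trace = "nat \<Rightarrow> 'v store"
type_synonym 'v ftrace = "'v store list"

definition deterministic :: "'v trace set \<Rightarrow> bool" where
  "deterministic M \<longleftrightarrow> (\<forall>t1\<in>M. \<forall>t2\<in>M. t1 0 Hv = t2 0 Hv \<longrightarrow> t1 = t2)"

definition input_domain :: "'v trace set \<Rightarrow> 'v option set" where
  "input_domain M = {t 0 Hv | t. t \<in> M}"

definition Prop :: "'v trace set set" where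
  "Prop = {M. deterministic M \<and> finite (input_domain M) \<and> input_domain M \<noteq> {}}"

definition trace_of :: "'v trace set \<Rightarrow> 'v option \<Rightarrow> 'v trace" where
  "trace_of M h = (THE t. t \<in> M \<and> t 0 Hv = h)"

definition out :: "'v trace set \<Rightarrow> 'v option \<Rightarrow> (nat \<Rightarrow> 'v option)" where
  "out M h = (\<lambda>i. trace_of M h (Suc i) Ov)"

definition out_is :: "'v trace set \<Rightarrow> 'v option \<Rightarrow> (nat \<Rightarrow> 'v option) \<Rightarrow> bool" where
  "out_is M h ob \<longleftrightarrow> (\<forall>i. ob i = None \<or> out M h i = None \<or> out M h i = ob i)"

definition outputs :: "'v trace set \<Rightarrow> (nat \<Rightarrow> 'v option) set" where
  "outputs M = out M ` input_domain M"

definition prob_O :: "('v option \<Rightarrow> real) \<Rightarrow> 'v trace set \<Rightarrow> (nat \<Rightarrow> 'v option) \<Rightarrow> real" where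
  "prob_O mu M ob = (\<Sum>h\<in>{h\<in>input_domain M. out_is M h ob}. mu h)"

definition cond_prob :: "('v option \<Rightarrow> real) \<Rightarrow> 'v trace set \<Rightarrow> 'v option \<Rightarrow> (nat \<Rightarrow> 'v option) \<Rightarrow> real" where
  "cond_prob mu M h ob = (if out_is M h ob then mu h else 0) / prob_O mu M ob"

definition V_H :: "('v option \<Rightarrow> real) \<Rightarrow> 'v trace set \<Rightarrow> real" where
  "V_H mu M = Max (mu ` input_domain M)"

definition V_HO :: "('v option \<Rightarrow> real) \<Rightarrow> 'v trace set \<Rightarrow> real" where
  "V_HO mu M = (\<Sum>ob\<in>outputs M. prob_O mu M ob * Max ((\<lambda>h. cond_prob mu M h ob) ` input_domain M))"

definition ME :: "('v option \<Rightarrow> real) \<Rightarrow> 'v trace set \<Rightarrow> real" where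
  "ME mu M = log 2 (1 / V_H mu M) - log 2 (1 / V_HO mu M)"

definition U :: "'v trace set \<Rightarrow> 'v option \<Rightarrow> real" where
  "U M h = (if h \<in> input_domain M then 1 / real (card (input_domain M)) else 0)"

definition Obs :: "'v ftrace set set" where
  "Obs = {S. finite S \<and> (\<forall>t1\<in>S. \<forall>t2\<in>S. t1 \<noteq> [] \<longrightarrow> t2 \<noteq> [] \<longrightarrow>
                 (t1 ! 0) Hv = (t2 ! 0) Hv \<longrightarrow> t1 = t2)}"

definition tconcat :: "'v ftrace \<Rightarrow> 'v trace \<Rightarrow> 'v trace" where
  "tconcat t t' = (\<lambda>i. if i < length t then t ! i else t' (i - length t))"

definition obs_le :: "'v ftrace set \<Rightarrow> 'v trace set \<Rightarrow> bool" where
  "obs_le S T \<longleftrightarrow> (\<forall>t\<in>S. \<exists>t'. tconcat t t' \<in> T)"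

definition k_observable :: "'v trace set set \<Rightarrow> nat \<Rightarrow> bool" where
  "k_observable P k \<longleftrightarrow> P \<subseteq> Prop \<and>
     (\<forall>S\<in>P. \<exists>T\<in>Obs. obs_le T S \<and> card T \<le> k \<and> (\<forall>S'\<in>Prop. obs_le T S' \<longrightarrow> S' \<in> P))"

end

theory Submission
  imports Defs
begin
lemma trace_of_mem:
  assumes "M \<in> Prop" "h \<in> input_domain M"
  shows "trace_of M h \<in> M \<and> trace_of M h 0 Hv = h"
proof -
  obtain t where t: "t \<in> M" "t 0 Hv = h" using assms(2) unfolding input_domain_def by auto
  have det: "deterministic M" using assms(1) unfolding Prop_def by auto
  have "trace_of M h = t" unfolding trace_of_def
    by (rule the_equality) (use t det in \<open>auto simp: deterministic_def\<close>)
  thus ?thesis using t by simp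
qed

lemma trace_of_eq:
  assumes "M \<in> Prop" "t \<in> M"
  shows "trace_of M (t 0 Hv) = t"
proof -
  have det: "deterministic M" using assms(1) unfolding Prop_def by auto
  show ?thesis unfolding trace_of_def
    by (rule the_equality) (use assms det in \<open>auto simp: deterministic_def\<close>)
qed

lemma ME_U:
  assumes "M \<in> Prop"
  shows "ME (U M) M = log 2 (real (card (outputs M)))"
proof -
  let ?D = "input_domain M"
  define n where "n = card ?D"
  have fin: "finite ?D" and ne: "?D \<noteq> {}" using assms by (simp_all add: Prop_def)
  have npos: "n > 0" unfolding n_def using fin ne by (simp add: card_gt_0_iff)
  have VH: "V_H (U M) M = 1 / real n"
    unfolding V_H_def
  proof (rule Max_eqI)
    show "finite (U M ` ?D)" using fin by simp
    obtain h1 where h1: "h1 \<in> ?D" using ne by blast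
    have "U M h1 = 1 / real n" using h1 by (simp add: U_def n_def)
    thus "1 / real n \<in> U M ` ?D" using h1 by (metis image_eqI)
    fix y assume "y \<in> U M ` ?D"
    then obtain h where h: "h \<in> ?D" "y = U M h" by blast
    thus "y \<le> 1 / real n" by (simp add: U_def n_def)
  qed
  have trm: "prob_O (U M) M ob * Max ((\<lambda>h. cond_prob (U M) M h ob) ` ?D) = 1 / real n"
    if ob: "ob \<in> outputs M" for ob
  proof -
    obtain h0 where h0: "h0 \<in> ?D" "ob = out M h0" using ob by (auto simp: outputs_def)
    have r0: "out_is M h0 ob" using h0 by (simp add: out_is_def)
    define A where "A = {h\<in>?D. out_is M h ob}"
    have finA: "finite A" using fin A_def by auto
    have h0A: "h0 \<in> A" using h0 r0 A_def by auto
    have p: "prob_O (U M) M ob = real (card A) / real n"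
    proof -
      have "prob_O (U M) M ob = (\<Sum>h\<in>A. 1 / real n)"
        unfolding prob_O_def A_def[symmetric] by (rule sum.cong) (simp_all add: A_def U_def n_def)
      thus ?thesis by simp
    qed
    have cA: "card A > 0" using finA h0A by (simp add: card_gt_0_iff) blast
    have ppos: "prob_O (U M) M ob > 0" using p cA npos by simp
    have mx: "Max ((\<lambda>h. cond_prob (U M) M h ob) ` ?D) = (1 / real n) / prob_O (U M) M ob"
    proof (rule Max_eqI)
      show "finite ((\<lambda>h. cond_prob (U M) M h ob) ` ?D)" using fin by simp
      show "(1 / real n) / prob_O (U M) M ob \<in> (\<lambda>h. cond_prob (U M) M h ob) ` ?D"
      proof (rule rev_image_eqI[OF h0(1)])
        show "(1 / real n) / prob_O (U M) M ob = cond_prob (U M) M h0 ob"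
          using h0(1) r0 by (simp add: cond_prob_def U_def n_def)
      qed
      fix y assume "y \<in> (\<lambda>h. cond_prob (U M) M h ob) ` ?D"
      then obtain h where "h \<in> ?D" "y = cond_prob (U M) M h ob" by auto
      thus "y \<le> (1 / real n) / prob_O (U M) M ob" using ppos
        by (cases "out_is M h ob") (simp_all add: cond_prob_def U_def n_def)
    qed
    show ?thesis using mx ppos by simp
  qed
  have VHO: "V_HO (U M) M = real (card (outputs M)) / real n"
    unfolding V_HO_def using trm by simp
  have finO: "finite (outputs M)" using fin by (simp add: outputs_def)
  have neO: "outputs M \<noteq> {}" using ne by (simp add: outputs_def)
  have mpos: "card (outputs M) > 0" using finO neO by (simp add: card_gt_0_iff)
  have e1: "1 / (1 / real n) = real n" by simp
  have e2: "1 / (real (card (outputs M)) / real n) = real n / real (card (outputs M))" by simp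
  have e3: "log 2 (real n / real (card (outputs M))) = log 2 (real n) - log 2 (real (card (outputs M)))"
    using npos mpos by (simp add: log_divide)
  show ?thesis unfolding ME_def VH VHO e1 e2 e3 by simp
qed

lemma card_gt_iff:
  fixes m :: nat and x :: real
  assumes x0: "x \<ge> 0"
  shows "x < real m \<longleftrightarrow> nat \<lfloor>x\<rfloor> + 1 \<le> m"
proof
  assume "x < real m"
  hence "\<lfloor>x\<rfloor> < int m" by linarith
  hence "nat \<lfloor>x\<rfloor> < m" using x0 by (simp add: nat_less_iff)
  thus "nat \<lfloor>x\<rfloor> + 1 \<le> m" by linarith
next
  assume "nat \<lfloor>x\<rfloor> + 1 \<le> m"
  moreover have "\<lfloor>x\<rfloor> \<le> int (nat \<lfloor>x\<rfloor>)" by simp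
  ultimately have "\<lfloor>x\<rfloor> < int m" by linarith
  thus "x < real m" by linarith
qed

lemma ME_gt_iff:
  assumes "M \<in> Prop"
  shows "ME (U M) M > y \<longleftrightarrow> 2 powr y < real (card (outputs M))"
proof -
  have fin: "finite (input_domain M)" and ne: "input_domain M \<noteq> {}" using assms unfolding Prop_def by auto
  have finO: "finite (outputs M)" using fin by (simp add: outputs_def)
  have neO: "outputs M \<noteq> {}" using ne by (simp add: outputs_def)
  have mpos: "card (outputs M) > 0" using finO neO by (simp add: card_gt_0_iff)
  show ?thesis using ME_U[OF assms] mpos by (simp add: less_log_iff)
qed

lemma transfer_obs:
  assumes S'P: "S' \<in> Prop" and SP: "S \<in> Prop" and h: "h \<in> input_domain S"
    and ex: "tconcat (map (trace_of S h) [0..<Suc N]) t' \<in> S'"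
  shows "h \<in> input_domain S' \<and> (\<forall>i<N. out S' h i = out S h i)"
proof -
  let ?tr = "tconcat (map (trace_of S h) [0..<Suc N]) t'"
  have h0: "?tr 0 Hv = h" using trace_of_mem[OF SP h] by (simp add: tconcat_def del: upt_Suc)
  have "?tr 0 Hv \<in> input_domain S'" unfolding input_domain_def using ex by blast
  hence "h \<in> input_domain S'" using h0 by simp
  moreover have "trace_of S' h = ?tr" using trace_of_eq[OF S'P ex] h0 by simp
  ultimately show ?thesis
    by (auto simp: out_def tconcat_def nth_map simp del: upt_Suc)
qed

theorem theorem10:
  fixes q :: rat
  shows "k_observable {M :: 'v trace set. M \<in> Prop \<and> ME (U M) M > real_of_rat q}
           (nat \<lfloor>2 powr real_of_rat q\<rfloor> + 1)"
  unfolding k_observable_def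
proof (intro conjI)
  show "{M :: 'v trace set. M \<in> Prop \<and> ME (U M) M > real_of_rat q} \<subseteq> Prop" by auto
  show "\<forall>S\<in>{M :: 'v trace set. M \<in> Prop \<and> ME (U M) M > real_of_rat q}.
          \<exists>T\<in>Obs. obs_le T S \<and> card T \<le> nat \<lfloor>2 powr real_of_rat q\<rfloor> + 1 \<and>
          (\<forall>S'\<in>Prop. obs_le T S' \<longrightarrow>
             S' \<in> {M :: 'v trace set. M \<in> Prop \<and> ME (U M) M > real_of_rat q})"
  proof
  fix S :: "'v trace set"
  assume "S \<in> {M :: 'v trace set. M \<in> Prop \<and> ME (U M) M > real_of_rat q}"
  hence SP: "S \<in> Prop" and SME: "ME (U S) S > real_of_rat q" by auto
  define k where "k = nat \<lfloor>2 powr real_of_rat q\<rfloor> + 1"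
  have x0: "2 powr real_of_rat q \<ge> 0" by simp
  let ?D = "input_domain S"
  have fin: "finite ?D" using SP unfolding Prop_def by auto
  have finO: "finite (outputs S)" using fin by (simp add: outputs_def)
  have "k \<le> card (outputs S)"
    using SME ME_gt_iff[OF SP] card_gt_iff[OF x0] k_def by simp
  then obtain O' where O': "O' \<subseteq> outputs S" "card O' = k"
    using obtain_subset_with_card_n by metis
  define Hs where "Hs = inv_into ?D (out S) ` O'"
  have HsD: "Hs \<subseteq> ?D" using O'(1) unfolding Hs_def outputs_def
    by (auto intro: inv_into_into)
  have outHs: "out S ` Hs = O'" using O'(1) unfolding Hs_def outputs_def
    by (rule image_inv_into_cancel[OF refl])
  have finHs: "finite Hs" using HsD fin by (rule finite_subset)
  have injHs: "inj_on (out S) Hs"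
  proof (rule inj_onI)
    fix a b assume ab: "a \<in> Hs" "b \<in> Hs" "out S a = out S b"
    then obtain x y where xy: "x \<in> O'" "y \<in> O'" "a = inv_into ?D (out S) x" "b = inv_into ?D (out S) y"
      by (auto simp: Hs_def)
    have "out S a = x" "out S b = y" using xy O'(1) by (auto simp: outputs_def f_inv_into_f)
    thus "a = b" using ab(3) xy by simp
  qed
  have cHs: "card Hs = k" using card_image[OF injHs] outHs O'(2) by simp
  define Dp where "Dp = {p. fst p \<in> Hs \<and> snd p \<in> Hs \<and> fst p \<noteq> snd p}"
  have finDp: "finite Dp"
    by (rule finite_subset[of _ "Hs \<times> Hs"]) (use finHs in \<open>auto simp: Dp_def\<close>)
  define f where "f p = (SOME i. out S (fst p) i \<noteq> out S (snd p) i)" for p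
  define N where "N = Suc (sum f Dp)"
  have fdiff: "f p < N \<and> out S (fst p) (f p) \<noteq> out S (snd p) (f p)" if "p \<in> Dp" for p
  proof
    have "f p \<le> sum f Dp" by (rule member_le_sum[OF that _ finDp]) simp
    thus "f p < N" by (simp add: N_def)
    have "out S (fst p) \<noteq> out S (snd p)" using that injHs by (auto simp: Dp_def inj_on_def)
    then obtain i where "out S (fst p) i \<noteq> out S (snd p) i" by auto
    thus "out S (fst p) (f p) \<noteq> out S (snd p) (f p)" unfolding f_def by (rule someI)
  qed
  define pref where "pref h = map (trace_of S h) [0..<Suc N]" for h
  define T where "T = pref ` Hs"
  show "\<exists>T\<in>Obs. obs_le T S \<and> card T \<le> nat \<lfloor>2 powr real_of_rat q\<rfloor> + 1 \<and>
          (\<forall>S'\<in>Prop. obs_le T S' \<longrightarrow>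
             S' \<in> {M :: 'v trace set. M \<in> Prop \<and> ME (U M) M > real_of_rat q})"
  proof (rule bexI[of _ T], intro conjI ballI impI)
    have pref0: "pref h ! 0 = trace_of S h 0" for h
      by (simp add: pref_def del: upt_Suc)
    show "T \<in> Obs" unfolding Obs_def
    proof (intro CollectI conjI ballI impI)
      show "finite T" using finHs by (simp add: T_def)
      fix t1 t2 assume t: "t1 \<in> T" "t2 \<in> T" "t1 \<noteq> []" "t2 \<noteq> []" "(t1 ! 0) Hv = (t2 ! 0) Hv"
      then obtain h1 h2 where h: "h1 \<in> Hs" "h2 \<in> Hs" "t1 = pref h1" "t2 = pref h2"
        by (auto simp: T_def)
      have e1: "trace_of S h1 0 Hv = h1" using trace_of_mem[OF SP] HsD h(1) by blast
      have e2: "trace_of S h2 0 Hv = h2" using trace_of_mem[OF SP] HsD h(2) by blast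
      have "h1 = h2" using t(5) h(3,4) pref0 e1 e2 by simp
      thus "t1 = t2" using h by simp
    qed
    show "obs_le T S" unfolding obs_le_def
    proof
      fix t assume "t \<in> T"
      then obtain h where h: "h \<in> Hs" "t = pref h" by (auto simp: T_def)
      have "tconcat t (\<lambda>i. trace_of S h (i + Suc N)) = trace_of S h"
        using h(2) by (auto simp: tconcat_def pref_def nth_map simp del: upt_Suc)
      thus "\<exists>t'. tconcat t t' \<in> S" using trace_of_mem[OF SP] h HsD by (metis subsetD)
    qed
    show "card T \<le> nat \<lfloor>2 powr real_of_rat q\<rfloor> + 1"
      unfolding T_def k_def[symmetric] using card_image_le[OF finHs, of pref] cHs by simp
    fix S' :: "'v trace set"
    assume S'P: "S' \<in> Prop" and le: "obs_le T S'"
    have tr: "h \<in> input_domain S' \<and> (\<forall>i<N. out S' h i = out S h i)" if hH: "h \<in> Hs" for h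
    proof -
      obtain t' where "tconcat (pref h) t' \<in> S'" using le hH by (auto simp: obs_le_def T_def)
      thus ?thesis using transfer_obs[OF S'P SP, of h N t'] hH HsD by (auto simp: pref_def)
    qed
    have inj': "inj_on (out S') Hs"
    proof (rule inj_onI, rule ccontr)
      fix a b assume ab: "a \<in> Hs" "b \<in> Hs" "out S' a = out S' b" "a \<noteq> b"
      hence "(a, b) \<in> Dp" by (simp add: Dp_def)
      from fdiff[OF this] have fl: "f (a, b) < N"
        and ne: "out S a (f (a, b)) \<noteq> out S b (f (a, b))" by simp_all
      have "out S' a (f (a, b)) = out S a (f (a, b))" using tr[OF ab(1)] fl by blast
      moreover have "out S' b (f (a, b)) = out S b (f (a, b))" using tr[OF ab(2)] fl by blast
      ultimately show False using ab(3) ne by simp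
    qed
    have fin': "finite (outputs S')" using S'P unfolding Prop_def outputs_def by auto
    have sub: "out S' ` Hs \<subseteq> outputs S'" using tr unfolding outputs_def by auto
    have "k \<le> card (outputs S')"
      using card_mono[OF fin' sub] card_image[OF inj'] cHs by simp
    hence "ME (U S') S' > real_of_rat q"
      using ME_gt_iff[OF S'P] card_gt_iff[OF x0] k_def by simp
    thus "S' \<in> {M :: 'v trace set. M \<in> Prop \<and> ME (U M) M > real_of_rat q}" using S'P by simp
  qed
  qed
qed

end
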